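(* Let $\mathcal P_1$ be a shortest path and $\mathcal P_2$ another path, both between nodes $u_0$ and $u_1$, and write $\delta=\delta_{\mathrm{worst}}(G)$. Define $$\eta_{\mathcal P_1,\mathcal P_2}=(6\delta+2)\log_2\Big((6\mu+2)(6\delta+2)\log_2\big[(6\delta+2)(3\mu+1)\mu\big]+\mu\Big)$$ if $\mathcal P_2$ is $\mu$-approximate short, and $$\eta_{\mathcal P_1,\mathcal P_2}=(6\delta+2)\log_2\Big(8(6\delta+2)\log_2\big[(6\delta+2)(4+2\varepsilon)\big]+1+\tfrac{\varepsilon}{2}\Big)$$ if $\mathcal P_2$ is $\varepsilon$-additive-approximate short. Then: (a) for every node $v$ on $\mathcal P_1$ there is a node $v'$ on $\mathcal P_2$ with $d_{v,v'}\le\lfloor\eta_{\mathcal P_1,\mathcal P_2}\rfloor$; (b) for every node $v'$ on $\mathcal P_2$ there is a node $v$ on $\mathcal P_1$ with $d_{v,v'}\le\zeta_{\mathcal P_1,\mathcal P_2}$, where $\zeta_{\mathcal P_1,\mathcal P_2}=\min\{\lfloor(\mu+1)\eta_{\mathcal P_1,\mathcal P_2}+\mu/2\rfloor,\ \lfloor \mu\, d_{u_0,u_1}/2\rfloor\}$ if $\mathcal P_2$ is $\mu$-approximate short, and $\zeta_{\mathcal P_1,\mathcal P_2}=\min\{\lfloor 2\eta_{\mathcal P_1,\mathcal P_2}+(1+\varepsilon)/2\rfloor,\ \lfloor (d_{u_0,u_1}+\varepsilon)/2\rfloor\}$ if $\mathcal P_2$ is $\varepsilon$-additive-approximate short.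
   Context: $G=(V,E)$ is a finite connected undirected graph with $n\ge 4$ nodes and $d_{u,v}$ denotes the shortest-path distance (number of edges); $\ell(\mathcal P)$ denotes the number of edges of a path $\mathcal P$. For any four nodes $w_1,w_2,w_3,w_4$, form the three sums $d_{w_1,w_2}+d_{w_3,w_4}$, $d_{w_1,w_3}+d_{w_2,w_4}$, $d_{w_1,w_4}+d_{w_2,w_3}$, order them as $S\le M\le L$, and set $\delta_{w_1,w_2,w_3,w_4}=(L-M)/2$; $\delta_{\mathrm{worst}}(G)=\max_{w_1,w_2,w_3,w_4\in V}\delta_{w_1,w_2,w_3,w_4}$. A path $(w_0,w_1,\dots,w_k)$ is $\mu$-approximate short (with $\mu\ge1$) if for all $0\le i<j\le k$ the length of its subpath from $w_i$ to $w_j$ is at most $\mu\, d_{w_i,w_j}$. It is $\varepsilon$-additive-approximate short (with $\varepsilon\ge0$) if its length is at most $d_{w_0,w_k}+\varepsilon$. *)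

theory Defs
  imports Complex_Main
begin

definition graph :: "'a set \<Rightarrow> ('a \<Rightarrow> 'a \<Rightarrow> bool) \<Rightarrow> bool" where
  "graph V E \<longleftrightarrow> finite V \<and> (\<forall>u v. E u v \<longrightarrow> u \<in> V \<and> v \<in> V)
     \<and> (\<forall>u v. E u v \<longrightarrow> E v u) \<and> (\<forall>u. \<not> E u u)"

definition is_walk :: "'a set \<Rightarrow> ('a \<Rightarrow> 'a \<Rightarrow> bool) \<Rightarrow> 'a list \<Rightarrow> bool" where
  "is_walk V E xs \<longleftrightarrow> xs \<noteq> [] \<and> set xs \<subseteq> V \<and>
     (\<forall>i. Suc i < length xs \<longrightarrow> E (xs ! i) (xs ! Suc i))"

definition is_path :: "'a set \<Rightarrow> ('a \<Rightarrow> 'a \<Rightarrow> bool) \<Rightarrow> 'a list \<Rightarrow> bool" where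
  "is_path V E xs \<longleftrightarrow> is_walk V E xs \<and> distinct xs"

definition plen :: "'a list \<Rightarrow> nat" where
  "plen xs = length xs - 1"

definition connected_graph :: "'a set \<Rightarrow> ('a \<Rightarrow> 'a \<Rightarrow> bool) \<Rightarrow> bool" where
  "connected_graph V E \<longleftrightarrow> (\<forall>u\<in>V. \<forall>v\<in>V. \<exists>xs. is_walk V E xs \<and> hd xs = u \<and> last xs = v)"

definition gdist :: "'a set \<Rightarrow> ('a \<Rightarrow> 'a \<Rightarrow> bool) \<Rightarrow> 'a \<Rightarrow> 'a \<Rightarrow> nat" where
  "gdist V E u v = (LEAST k. \<exists>xs. is_walk V E xs \<and> hd xs = u \<and> last xs = v \<and> plen xs = k)"

definition delta4 :: "'a set \<Rightarrow> ('a \<Rightarrow> 'a \<Rightarrow> bool) \<Rightarrow> 'a \<Rightarrow> 'a \<Rightarrow> 'a \<Rightarrow> 'a \<Rightarrow> real" where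
  "delta4 V E w1 w2 w3 w4 =
    (let s1 = gdist V E w1 w2 + gdist V E w3 w4;
         s2 = gdist V E w1 w3 + gdist V E w2 w4;
         s3 = gdist V E w1 w4 + gdist V E w2 w3;
         L = max s1 (max s2 s3);
         S = min s1 (min s2 s3);
         M = s1 + s2 + s3 - L - S
     in (real L - real M) / 2)"

definition delta_worst :: "'a set \<Rightarrow> ('a \<Rightarrow> 'a \<Rightarrow> bool) \<Rightarrow> real" where
  "delta_worst V E = Max {delta4 V E w1 w2 w3 w4 | w1 w2 w3 w4. w1 \<in> V \<and> w2 \<in> V \<and> w3 \<in> V \<and> w4 \<in> V}"

definition mu_approx_short :: "'a set \<Rightarrow> ('a \<Rightarrow> 'a \<Rightarrow> bool) \<Rightarrow> real \<Rightarrow> 'a list \<Rightarrow> bool" where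
  "mu_approx_short V E \<mu> xs \<longleftrightarrow>
     (\<forall>i j. i < j \<and> j < length xs \<longrightarrow> real (j - i) \<le> \<mu> * real (gdist V E (xs ! i) (xs ! j)))"

definition eps_additive_short :: "'a set \<Rightarrow> ('a \<Rightarrow> 'a \<Rightarrow> bool) \<Rightarrow> real \<Rightarrow> 'a list \<Rightarrow> bool" where
  "eps_additive_short V E \<epsilon> xs \<longleftrightarrow> real (plen xs) \<le> real (gdist V E (hd xs) (last xs)) + \<epsilon>"

definition eta_mu :: "real \<Rightarrow> real \<Rightarrow> real" where
  "eta_mu \<delta> \<mu> = (6*\<delta>+2) * log 2 ((6*\<mu>+2)*(6*\<delta>+2) * log 2 ((6*\<delta>+2)*(3*\<mu>+1)*\<mu>) + \<mu>)"

definition eta_eps :: "real \<Rightarrow> real \<Rightarrow> real" where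
  "eta_eps \<delta> \<epsilon> = (6*\<delta>+2) * log 2 (8*(6*\<delta>+2) * log 2 ((6*\<delta>+2)*(4+2*\<epsilon>)) + 1 + \<epsilon>/2)"

end

theory Submission
  imports Defs
begin


lemma ln2_ge: "ln (2::real) \<ge> 1/2"
proof -
  have "ln (1/2::real) \<le> 1/2 - 1" by (rule ln_le_minus_one) simp
  moreover have "ln (1/2::real) = - ln 2" by (simp add: ln_div)
  ultimately show ?thesis by simp
qed

locale hg = fixes V and E :: "'a \<Rightarrow> 'a \<Rightarrow> bool"
  assumes graph: "graph V E" and conn: "connected_graph V E"
begin

abbreviation d where "d \<equiv> gdist V E"

lemma fun_walk:
  assumes "\<And>k. k \<le> n \<Longrightarrow> f k \<in> V" "\<And>k. k < n \<Longrightarrow> E (f k) (f (Suc k))"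
  shows "is_walk V E (map f [0..<Suc n])" "hd (map f [0..<Suc n]) = f 0"
    "last (map f [0..<Suc n]) = f n" "plen (map f [0..<Suc n]) = n"
proof -
  show "is_walk V E (map f [0..<Suc n])" unfolding is_walk_def
  proof (intro conjI allI impI)
    show "set (map f [0..<Suc n]) \<subseteq> V" using assms(1) by auto
    fix i assume "Suc i < length (map f [0..<Suc n])"
    then have "i < n" by simp
    then show "E (map f [0..<Suc n] ! i) (map f [0..<Suc n] ! Suc i)"
      using assms(2) by (simp del: upt_Suc add: nth_map_upt)
  qed simp
  show "hd (map f [0..<Suc n]) = f 0" by (simp del: upt_Suc add: hd_map hd_upt)
  show "last (map f [0..<Suc n]) = f n" by (simp del: upt_Suc add: last_map)
  show "plen (map f [0..<Suc n]) = n" by (simp add: plen_def)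
qed

lemma gdist_le_walk: "is_walk V E xs \<Longrightarrow> d (hd xs) (last xs) \<le> plen xs"
  unfolding gdist_def by (rule Least_le) blast

lemma gdist_le_fun:
  assumes "\<And>k. k \<le> n \<Longrightarrow> f k \<in> V" "\<And>k. k < n \<Longrightarrow> E (f k) (f (Suc k))"
  shows "d (f 0) (f n) \<le> n"
proof -
  have "d (hd (map f [0..<Suc n])) (last (map f [0..<Suc n])) \<le> plen (map f [0..<Suc n])"
    by (rule gdist_le_walk, rule fun_walk(1)) (use assms in auto)
  moreover have "hd (map f [0..<Suc n]) = f 0" "last (map f [0..<Suc n]) = f n" "plen (map f [0..<Suc n]) = n"
    by (rule fun_walk; use assms in auto)+
  ultimately show ?thesis by simp
qed

lemma walk_ex:
  assumes "u \<in> V" "v \<in> V"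
  shows "\<exists>xs. is_walk V E xs \<and> hd xs = u \<and> last xs = v \<and> plen xs = d u v"
proof -
  obtain xs where "is_walk V E xs \<and> hd xs = u \<and> last xs = v"
    using conn assms unfolding connected_graph_def by blast
  then have "\<exists>k xs. is_walk V E xs \<and> hd xs = u \<and> last xs = v \<and> plen xs = k" by blast
  then show ?thesis unfolding gdist_def by (rule LeastI_ex)
qed

lemma walk_nth:
  assumes "is_walk V E xs" "i \<le> j" "j < length xs"
  shows "d (xs!i) (xs!j) \<le> j - i" "d (xs!j) (xs!i) \<le> j - i"
proof -
  have w: "set xs \<subseteq> V" "\<And>k. Suc k < length xs \<Longrightarrow> E (xs!k) (xs!Suc k)"
    using assms(1) unfolding is_walk_def by auto
  have "d ((\<lambda>k. xs!(i+k)) 0) ((\<lambda>k. xs!(i+k)) (j-i)) \<le> j - i"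
    by (rule gdist_le_fun) (use w assms in auto)
  then show "d (xs!i) (xs!j) \<le> j - i" using assms by simp
  have "d ((\<lambda>k. xs!(j-k)) 0) ((\<lambda>k. xs!(j-k)) (j-i)) \<le> j - i"
  proof (rule gdist_le_fun)
    fix k assume "k < j - i"
    then have "E (xs ! Suc (j - Suc k)) (xs ! (j - Suc k))"
      using w(2)[of "j - Suc k"] assms graph unfolding graph_def by auto
    moreover have "Suc (j - Suc k) = j - k" using \<open>k < j - i\<close> by simp
    ultimately show "E (xs ! (j - k)) (xs ! (j - Suc k))" by simp
  qed (use w assms in auto)
  then show "d (xs!j) (xs!i) \<le> j - i" using assms by simp
qed

lemma walk_hd_last_nth: "xs \<noteq> [] \<Longrightarrow> hd xs = xs ! 0 \<and> last xs = xs ! (length xs - 1)"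
  by (simp add: hd_conv_nth last_conv_nth)

lemma gdist_sym_le:
  assumes "u \<in> V" "v \<in> V" shows "d v u \<le> d u v"
proof -
  obtain xs where xs: "is_walk V E xs" "hd xs = u" "last xs = v" "plen xs = d u v"
    using walk_ex assms by blast
  have ne: "xs \<noteq> []" using xs unfolding is_walk_def by auto
  have "d (xs ! (length xs - 1)) (xs ! 0) \<le> length xs - 1 - 0"
    by (rule walk_nth(2)) (use xs ne in auto)
  then show ?thesis using xs walk_hd_last_nth[OF ne] by (simp add: plen_def)
qed

lemma gdist_sym: "u \<in> V \<Longrightarrow> v \<in> V \<Longrightarrow> d u v = d v u"
  using gdist_sym_le by (meson le_antisym)

lemma gdist_refl: "u \<in> V \<Longrightarrow> d u u = 0"
  using gdist_le_fun[of 0 "\<lambda>_. u"] by simp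

lemma gdist_adj: "E u v \<Longrightarrow> d u v \<le> 1"
  using gdist_le_fun[of 1 "\<lambda>k. if k = 0 then u else v"] graph unfolding graph_def by auto

lemma gdist_zero: assumes "u \<in> V" "v \<in> V" "d u v = 0" shows "u = v"
proof -
  obtain xs where xs: "is_walk V E xs" "hd xs = u" "last xs = v" "plen xs = d u v"
    using walk_ex assms by blast
  have ne: "xs \<noteq> []" using xs unfolding is_walk_def by auto
  then have "length xs = 1" using xs assms(3) by (cases xs) (auto simp: plen_def)
  then show ?thesis using xs walk_hd_last_nth[OF ne] by simp
qed

lemma gdist_tri:
  assumes "u \<in> V" "v \<in> V" "w \<in> V" shows "d u w \<le> d u v + d v w"
proof -
  obtain xs where xs: "is_walk V E xs" "hd xs = u" "last xs = v" "plen xs = d u v"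
    using walk_ex assms by blast
  obtain ys where ys: "is_walk V E ys" "hd ys = v" "last ys = w" "plen ys = d v w"
    using walk_ex assms by blast
  have nx: "xs \<noteq> []" and ny: "ys \<noteq> []" using xs ys unfolding is_walk_def by auto
  define n1 where "n1 = d u v"
  define n2 where "n2 = d v w"
  have lx: "length xs = Suc n1" using xs nx by (cases xs) (auto simp: plen_def n1_def)
  have ly: "length ys = Suc n2" using ys ny by (cases ys) (auto simp: plen_def n2_def)
  have wx: "set xs \<subseteq> V" "\<And>k. Suc k < length xs \<Longrightarrow> E (xs!k) (xs!Suc k)"
    using xs(1) unfolding is_walk_def by auto
  have wy: "set ys \<subseteq> V" "\<And>k. Suc k < length ys \<Longrightarrow> E (ys!k) (ys!Suc k)"
    using ys(1) unfolding is_walk_def by auto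
  have x0: "xs!0 = u" and xe: "xs!n1 = v" using xs walk_hd_last_nth[OF nx] lx by auto
  have y0: "ys!0 = v" and ye: "ys!n2 = w" using ys walk_hd_last_nth[OF ny] ly by auto
  define f where "f k = (if k \<le> n1 then xs!k else ys!(k-n1))" for k
  have "d (f 0) (f (n1+n2)) \<le> n1 + n2"
  proof (rule gdist_le_fun)
    fix k assume "k \<le> n1 + n2" then show "f k \<in> V"
      using wx wy lx ly unfolding f_def by (auto simp: subset_iff)
  next
    fix k assume k: "k < n1 + n2"
    show "E (f k) (f (Suc k))"
    proof (cases "Suc k \<le> n1")
      case True then show ?thesis using wx(2)[of k] lx unfolding f_def by auto
    next
      case False
      show ?thesis
      proof (cases "k = n1")
        case True then show ?thesis using wy(2)[of 0] ly k xe y0 unfolding f_def by auto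
      next
        case False
        then have "Suc k - n1 = Suc (k - n1)" "k > n1" using \<open>\<not> Suc k \<le> n1\<close> by auto
        then show ?thesis using wy(2)[of "k - n1"] ly k unfolding f_def by auto
      qed
    qed
  qed
  moreover have "f 0 = u" using x0 unfolding f_def by simp
  moreover have "f (n1+n2) = w" using ye xe y0 unfolding f_def by (cases n2) auto
  ultimately show ?thesis by (simp add: n1_def n2_def)
qed

end



lemma nat3_aux:
  fixes s1 s2 s3 :: nat
  shows "real s1 \<le> real (max s2 s3) +
    2 * ((real (max s1 (max s2 s3)) - real (s1 + s2 + s3 - max s1 (max s2 s3) - min s1 (min s2 s3))) / 2)"
  by (auto simp: max_def min_def of_nat_diff field_simps)

lemma nat3_nonneg:
  fixes s1 s2 s3 :: nat
  shows "0 \<le> (real (max s1 (max s2 s3)) - real (s1 + s2 + s3 - max s1 (max s2 s3) - min s1 (min s2 s3))) / 2"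
  by (auto simp: max_def min_def of_nat_diff)

context hg begin

abbreviation dw where "dw \<equiv> delta_worst V E"

lemma delta_le:
  assumes "w1 \<in> V" "w2 \<in> V" "w3 \<in> V" "w4 \<in> V"
  shows "delta4 V E w1 w2 w3 w4 \<le> dw"
proof -
  have fin: "finite V" using graph unfolding graph_def by auto
  have "{delta4 V E w1 w2 w3 w4 | w1 w2 w3 w4. w1 \<in> V \<and> w2 \<in> V \<and> w3 \<in> V \<and> w4 \<in> V}
     \<subseteq> (\<lambda>(a,b,c,e). delta4 V E a b c e) ` (V \<times> V \<times> V \<times> V)"
  proof
    fix x assume "x \<in> {delta4 V E w1 w2 w3 w4 | w1 w2 w3 w4. w1 \<in> V \<and> w2 \<in> V \<and> w3 \<in> V \<and> w4 \<in> V}"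
    then obtain w1 w2 w3 w4 where "x = delta4 V E w1 w2 w3 w4" "w1 \<in> V" "w2 \<in> V" "w3 \<in> V" "w4 \<in> V" by blast
    then show "x \<in> (\<lambda>(a,b,c,e). delta4 V E a b c e) ` (V \<times> V \<times> V \<times> V)"
      by (intro image_eqI[of _ _ "(w1,w2,w3,w4)"]) auto
  qed
  moreover have "finite ((\<lambda>(a,b,c,e). delta4 V E a b c e) ` (V \<times> V \<times> V \<times> V))" using fin by simp
  ultimately have "finite {delta4 V E w1 w2 w3 w4 | w1 w2 w3 w4. w1 \<in> V \<and> w2 \<in> V \<and> w3 \<in> V \<and> w4 \<in> V}"
    by (rule finite_subset)
  then show ?thesis unfolding delta_worst_def by (rule Max_ge) (use assms in blast)
qed

lemma dw_nonneg: assumes "w \<in> V" shows "0 \<le> dw"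
proof -
  have "0 \<le> delta4 V E w w w w" unfolding delta4_def Let_def by (rule nat3_nonneg)
  then show ?thesis using delta_le[of w w w w] assms by simp
qed

lemma four_point:
  assumes "x \<in> V" "y \<in> V" "z \<in> V" "p \<in> V"
  shows "real (d x z + d y p) \<le> real (max (d x y + d z p) (d x p + d z y)) + 2 * dw"
proof -
  have "real (d x z + d y p) \<le> real (max (d x y + d z p) (d x p + d z y)) + 2 * delta4 V E x z y p"
    unfolding delta4_def Let_def by (rule nat3_aux)
  then show ?thesis using delta_le[of x z y p] assms by simp
qed

definition gp where "gp p x y = (real (d p x) + real (d p y) - real (d x y)) / 2"

lemma gp_ineq:
  assumes "x \<in> V" "y \<in> V" "z \<in> V" "p \<in> V"
  shows "min (gp p x y) (gp p y z) - dw \<le> gp p x z"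
proof -
  have f: "real (d x z + d y p) \<le> real (max (d x y + d z p) (d x p + d z y)) + 2 * dw"
    by (rule four_point[OF assms])
  have s: "d y p = d p y" "d z p = d p z" "d x p = d p x" "d z y = d y z"
    using gdist_sym assms by auto
  show ?thesis
  proof (cases "d x y + d p z \<le> d p x + d y z")
    case True
    then have "real (d x z) + real (d p y) \<le> real (d p x) + real (d y z) + 2 * dw" using f s by simp
    then have "gp p y z - dw \<le> gp p x z" unfolding gp_def by (simp add: field_simps)
    then show ?thesis by linarith
  next
    case False
    then have "real (d x z) + real (d p y) \<le> real (d x y) + real (d p z) + 2 * dw" using f s by simp
    then have "gp p x y - dw \<le> gp p x z" unfolding gp_def by (simp add: field_simps)
    then show ?thesis by linarith
  qed
qed

lemma chain:
  assumes p: "p \<in> V" and dn: "0 \<le> dw"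
  shows "(\<And>i. a \<le> i \<Longrightarrow> i \<le> b \<Longrightarrow> x i \<in> V) \<Longrightarrow>
    (\<And>i. a \<le> i \<Longrightarrow> i < b \<Longrightarrow> m \<le> gp p (x i) (x (Suc i))) \<Longrightarrow>
    a < b \<Longrightarrow> b - a \<le> 2^k \<Longrightarrow> m - dw * k \<le> gp p (x a) (x b)"
proof (induction k arbitrary: a b)
  case 0
  then have "b = Suc a" by simp
  then show ?case using 0 by simp
next
  case (Suc k)
  show ?case
  proof (cases "b - a \<le> 2^k")
    case True
    then have "m - dw * k \<le> gp p (x a) (x b)" using Suc by blast
    then show ?thesis using dn by (simp add: algebra_simps)
  next
    case False
    define c where "c = a + 2^k"
    have ac: "a < c" "c < b" "c - a \<le> 2^k" "b - c \<le> 2^k" using False Suc.prems(4) unfolding c_def by auto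
    have h1: "m - dw * k \<le> gp p (x a) (x c)"
      by (rule Suc.IH) (use Suc.prems ac in auto)
    have h2: "m - dw * k \<le> gp p (x c) (x b)"
      by (rule Suc.IH) (use Suc.prems ac in auto)
    have "min (gp p (x a) (x c)) (gp p (x c) (x b)) - dw \<le> gp p (x a) (x b)"
      by (rule gp_ineq) (use Suc.prems ac p in auto)
    then show ?thesis using h1 h2 by (auto simp: algebra_simps)
  qed
qed

end



locale core = hg +
  fixes P1 P2 :: "'a list" and mu eps :: real
  assumes P1: "is_walk V E P1" "plen P1 = d (hd P1) (last P1)"
    and P2: "is_walk V E P2" "hd P2 = hd P1" "last P2 = last P1" "distinct P2"
    and mupos: "mu > 0" and epsnn: "eps \<ge> 0"
    and sub: "\<And>s t. s \<le> t \<Longrightarrow> t < length P2 \<Longrightarrow> real (t - s) \<le> mu * d (P2!s) (P2!t) + eps"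
begin

abbreviation g where "g i \<equiv> P1 ! i"
abbreviation c where "c j \<equiv> P2 ! j"
definition n where "n = length P1 - 1"
definition m where "m = length P2 - 1"

lemma ne: "P1 \<noteq> []" "P2 \<noteq> []" using P1 P2 unfolding is_walk_def by auto

lemma lens: "length P1 = Suc n" "length P2 = Suc m" using ne unfolding n_def m_def by auto

lemma gV: "i \<le> n \<Longrightarrow> g i \<in> V" using P1 lens unfolding is_walk_def by (auto simp: subset_iff)
lemma cV: "j \<le> m \<Longrightarrow> c j \<in> V" using P2 lens unfolding is_walk_def by (auto simp: subset_iff)

lemma ends: "g 0 = c 0" "g n = c m"
  using P2 walk_hd_last_nth[OF ne(1)] walk_hd_last_nth[OF ne(2)] lens by auto

lemma c_le: "p \<le> q \<Longrightarrow> q \<le> m \<Longrightarrow> d (c p) (c q) \<le> q - p"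
  using walk_nth(1)[OF P2(1)] lens by auto
lemma g_le: "p \<le> q \<Longrightarrow> q \<le> n \<Longrightarrow> d (g p) (g q) \<le> q - p"
  using walk_nth(1)[OF P1(1)] lens by auto

lemma dn: "d (g 0) (g n) = n"
  using P1(2) walk_hd_last_nth[OF ne(1)] lens by (simp add: plen_def)

lemma geo: assumes "i \<le> j" "j \<le> n" shows "d (g i) (g j) = j - i"
proof -
  have "n \<le> d (g 0) (g i) + d (g i) (g j) + d (g j) (g n)"
  proof -
    have "d (g 0) (g n) \<le> d (g 0) (g i) + d (g i) (g n)" by (rule gdist_tri) (use gV assms in auto)
    moreover have "d (g i) (g n) \<le> d (g i) (g j) + d (g j) (g n)" by (rule gdist_tri) (use gV assms in auto)
    ultimately show ?thesis using dn by linarith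
  qed
  moreover have "d (g 0) (g i) \<le> i" "d (g j) (g n) \<le> n - j" "d (g i) (g j) \<le> j - i"
    using g_le[of 0 i] g_le[of j n] g_le[of i j] assms by auto
  ultimately show ?thesis using assms by linarith
qed

definition dc where "dc v = Min ((\<lambda>j. d v (c j)) ` {..m})"

lemma dc_le: "j \<le> m \<Longrightarrow> dc v \<le> d v (c j)"
  unfolding dc_def by (rule Min_le) auto

lemma dc_ex: "\<exists>j\<le>m. d v (c j) = dc v"
proof -
  have "dc v \<in> (\<lambda>j. d v (c j)) ` {..m}" unfolding dc_def by (rule Min_in) auto
  then show ?thesis by auto
qed

definition D where "D = Max ((\<lambda>i. dc (g i)) ` {..n})"

lemma D_ge: "i \<le> n \<Longrightarrow> dc (g i) \<le> D"
  unfolding D_def by (rule Max_ge) auto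

lemma D_ex: "\<exists>k\<le>n. dc (g k) = D"
proof -
  have "D \<in> (\<lambda>i. dc (g i)) ` {..n}" unfolding D_def by (rule Max_in) auto
  then show ?thesis by auto
qed

lemma near: "i \<le> n \<Longrightarrow> \<exists>j\<le>m. d (g i) (c j) \<le> D"
  using dc_ex D_ge by (metis)

lemma dsym: "u \<in> V \<Longrightarrow> v \<in> V \<Longrightarrow> d u v = d v u" by (rule gdist_sym)

end



context core begin

lemma c_adj: "i \<le> m \<Longrightarrow> j \<le> m \<Longrightarrow> (j = Suc i \<or> i = Suc j) \<Longrightarrow> d (c i) (c j) \<le> 1"
proof -
  assume a: "i \<le> m" "j \<le> m" "j = Suc i \<or> i = Suc j"
  show ?thesis
  proof (cases "j = Suc i")
    case True then show ?thesis using c_le[of i j] a by auto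
  next
    case False then have "i = Suc j" using a by auto
    then show ?thesis using c_le[of j i] a dsym[OF cV cV, of i j] by auto
  qed
qed

lemma partA: "real D \<le> 1/2 + dw + dw * log 2 (6*mu*D + eps + 2)"
proof -
  obtain k where k: "k \<le> n" "dc (g k) = D" using D_ex by blast
  have gkV: "g k \<in> V" using gV k by simp
  have far: "\<And>j. j \<le> m \<Longrightarrow> D \<le> d (g k) (c j)" using dc_le k by metis
  have dwn: "0 \<le> dw" using dw_nonneg gkV by blast
  define a where "a = k - min k (2*D)"
  define b where "b = min n (k + 2*D)"
  have ab: "a \<le> k" "k \<le> b" "b \<le> n" "b - a \<le> 4*D" using k unfolding a_def b_def by auto
  obtain s where s: "s \<le> m" "d (g a) (c s) \<le> D" "a = 0 \<Longrightarrow> s = 0"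
  proof (cases "a = 0")
    case True
    then have "d (g a) (c 0) = 0" using ends gdist_refl cV[of 0] by auto
    then show ?thesis using that[of 0] True by auto
  next
    case False
    then show ?thesis using near[of a] ab that by auto
  qed
  obtain t where t: "t \<le> m" "d (g b) (c t) \<le> D" "b = n \<Longrightarrow> t = m"
  proof (cases "b = n")
    case True
    then have "d (g b) (c m) = 0" using ends gdist_refl cV[of m] by auto
    then show ?thesis using that[of m] True by auto
  next
    case False
    then show ?thesis using near[of b] ab that by auto
  qed
  have gaV: "g a \<in> V" and gbV: "g b \<in> V" using gV ab by auto
  have csV: "c s \<in> V" and ctV: "c t \<in> V" using cV s t by auto
  have j1: "real D \<le> gp (g k) (g a) (c s)"
  proof (cases "a = 0")
    case True
    then have e: "c s = g a" using s ends by simp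
    have "D \<le> d (g k) (g a)" using far[of 0] ends True by simp
    then show ?thesis unfolding gp_def e using gdist_refl[OF gaV] by simp
  next
    case False
    then have "k - a = 2*D" unfolding a_def by auto
    then have "d (g k) (g a) = 2*D" using geo[of a k] ab k dsym[OF gkV gaV] by simp
    moreover have "D \<le> d (g k) (c s)" using far s by simp
    ultimately show ?thesis unfolding gp_def using s(2) by simp
  qed
  have j2: "real D \<le> gp (g k) (c t) (g b)"
  proof (cases "b = n")
    case True
    then have e: "c t = g b" using t ends by simp
    have "D \<le> d (g k) (g b)" using far[of m] ends True by simp
    then show ?thesis unfolding gp_def e using gdist_refl[OF gbV] by simp
  next
    case False
    then have "b - k = 2*D" unfolding b_def by auto
    then have "d (g k) (g b) = 2*D" using geo[of k b] ab by simp
    moreover have "D \<le> d (g k) (c t)" using far t by simp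
    moreover have "d (c t) (g b) \<le> D" using t dsym[OF ctV gbV] by simp
    ultimately show ?thesis unfolding gp_def by simp
  qed
  have g0: "gp (g k) (g a) (g b) = 0"
  proof -
    have "d (g k) (g a) = k - a" using geo[of a k] ab k dsym[OF gkV gaV] by simp
    moreover have "d (g k) (g b) = b - k" using geo[of k b] ab by simp
    moreover have "d (g a) (g b) = b - a" using geo[of a b] ab by simp
    ultimately show ?thesis unfolding gp_def using ab by (simp add: of_nat_diff)
  qed
  define N where "N = (if s \<le> t then t - s else s - t)"
  define ci where "ci i = (if s \<le> t then s + i else s - i)" for i
  have ci_le: "\<And>i. i \<le> N \<Longrightarrow> ci i \<le> m" using s t unfolding ci_def N_def by auto
  have ci0: "ci 0 = s" and ciN: "ci N = t" unfolding ci_def N_def by auto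
  have ci_step: "\<And>i. i < N \<Longrightarrow> ci (Suc i) = Suc (ci i) \<or> ci i = Suc (ci (Suc i))"
    unfolding ci_def N_def by auto
  define x where "x i = (if i = 0 then g a else if i \<le> Suc N then c (ci (i - 1)) else g b)" for i
  have xV: "\<And>i. 0 \<le> i \<Longrightarrow> i \<le> Suc (Suc N) \<Longrightarrow> x i \<in> V"
    unfolding x_def using gaV gbV cV ci_le by auto
  have xstep: "\<And>i. 0 \<le> i \<Longrightarrow> i < Suc (Suc N) \<Longrightarrow> real D - 1/2 \<le> gp (g k) (x i) (x (Suc i))"
  proof -
    fix i assume i: "0 \<le> i" "i < Suc (Suc N)"
    show "real D - 1/2 \<le> gp (g k) (x i) (x (Suc i))"
    proof (cases "i = 0")
      case True then show ?thesis using j1 ci0 unfolding x_def by simp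
    next
      case False
      show ?thesis
      proof (cases "i = Suc N")
        case True then show ?thesis using j2 ciN unfolding x_def by simp
      next
        case False
        then obtain j where j: "i = Suc j" "j < N" using \<open>i \<noteq> 0\<close> i by (cases i) auto
        have e: "x i = c (ci j)" "x (Suc i) = c (ci (Suc j))" unfolding x_def using j by auto
        have "D \<le> d (g k) (c (ci j))" "D \<le> d (g k) (c (ci (Suc j)))" using far ci_le j by auto
        moreover have "d (c (ci j)) (c (ci (Suc j))) \<le> 1"
          using c_adj ci_le ci_step j by (metis Suc_leI less_imp_le_nat)
        ultimately show ?thesis unfolding e gp_def by simp
      qed
    qed
  qed
  define L where "L = Suc (Suc N)"
  define K where "K = nat \<lceil>log 2 (real L)\<rceil>"
  have Lpos: "real L \<ge> 1" unfolding L_def by simp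
  have lg0: "0 \<le> log 2 (real L)" using Lpos by simp
  have L2: "L \<le> 2^K"
  proof -
    have "real L = 2 powr (log 2 (real L))" using Lpos by simp
    also have "\<dots> \<le> 2 powr (real K)" unfolding K_def using lg0 by (intro powr_mono) auto
    also have "\<dots> = 2 ^ K" by (simp add: powr_realpow)
    finally show ?thesis by (metis of_nat_le_iff of_nat_numeral of_nat_power)
  qed
  have "real D - 1/2 - dw * K \<le> gp (g k) (x 0) (x L)"
    by (rule chain[OF gkV dwn]) (use xV xstep L2 in \<open>auto simp: L_def\<close>)
  moreover have "x 0 = g a" "x L = g b" unfolding x_def L_def by auto
  ultimately have m1: "real D \<le> 1/2 + dw * K" using g0 by simp
  have Kle: "real K \<le> log 2 L + 1" unfolding K_def using lg0 by linarith
  have Nle: "real N \<le> mu * d (c s) (c t) + eps"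
  proof (cases "s \<le> t")
    case True then show ?thesis using sub[of s t] t lens unfolding N_def by simp
  next
    case False then show ?thesis using sub[of t s] s lens dsym[OF csV ctV] unfolding N_def by simp
  qed
  have dst: "d (c s) (c t) \<le> 6 * D"
  proof -
    have "d (c s) (c t) \<le> d (c s) (g a) + d (g a) (c t)" by (rule gdist_tri) (use csV ctV gaV in auto)
    moreover have "d (g a) (c t) \<le> d (g a) (g b) + d (g b) (c t)" by (rule gdist_tri) (use ctV gaV gbV in auto)
    moreover have "d (g a) (g b) = b - a" using geo[of a b] ab by simp
    moreover have "d (c s) (g a) \<le> D" using s dsym[OF csV gaV] by simp
    ultimately show ?thesis using ab t by linarith
  qed
  have "real L \<le> 6 * mu * D + eps + 2"
  proof -
    have "mu * d (c s) (c t) \<le> mu * (6 * D)" using dst mupos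
      by (intro mult_left_mono) (auto simp del: of_nat_mult simp add: of_nat_mult[symmetric])
    then show ?thesis using Nle unfolding L_def by simp
  qed
  then have "log 2 L \<le> log 2 (6 * mu * D + eps + 2)" using Lpos by (intro log_mono) auto
  then have "dw * K \<le> dw * (log 2 (6 * mu * D + eps + 2) + 1)" using Kle dwn
    by (intro mult_left_mono) auto
  then show ?thesis using m1 by (simp add: algebra_simps)
qed

end



context core begin

lemma inP1: "v \<in> set P1 \<Longrightarrow> \<exists>i\<le>n. v = g i"
  using lens by (auto simp: in_set_conv_nth less_Suc_eq_le)
lemma inP2: "v \<in> set P2 \<Longrightarrow> \<exists>j\<le>m. v = c j"
  using lens by (auto simp: in_set_conv_nth less_Suc_eq_le)
lemma gin: "i \<le> n \<Longrightarrow> g i \<in> set P1" using lens by simp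
lemma cin: "j \<le> m \<Longrightarrow> c j \<in> set P2" using lens by simp

lemma partA2: "v \<in> set P1 \<Longrightarrow> \<exists>v'\<in>set P2. d v v' \<le> D"
  using inP1 near cin by metis

lemma partB2: "v' \<in> set P2 \<Longrightarrow> \<exists>v\<in>set P1. real (d v v') \<le> (mu * d (hd P1) (last P1) + eps)/2"
proof -
  assume "v' \<in> set P2"
  then obtain j where j: "j \<le> m" "v' = c j" using inP2 by blast
  have "real m \<le> mu * d (c 0) (c m) + eps" using sub[of 0 m] lens by simp
  moreover have "d (c 0) (c m) = d (hd P1) (last P1)"
    using ends walk_hd_last_nth[OF ne(1)] lens by simp
  ultimately have mb: "real m \<le> mu * d (hd P1) (last P1) + eps" by simp
  show ?thesis
  proof (cases "2*j \<le> m")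
    case True
    have "d (c 0) (c j) \<le> j" using c_le[of 0 j] j by simp
    then have "real (d (g 0) v') \<le> real m / 2" using True j ends by simp
    then show ?thesis using mb gin[of 0] by (intro bexI[of _ "g 0"]) auto
  next
    case False
    have "d (c j) (c m) \<le> m - j" using c_le[of j m] j by simp
    then have "d (c m) (c j) \<le> m - j" using dsym[OF cV cV, of j m] j by simp
    then have "real (d (g n) v') \<le> real m / 2" using False j ends by simp
    then show ?thesis using mb gin[of n] by (intro bexI[of _ "g n"]) auto
  qed
qed

lemma n0: "n = 0 \<Longrightarrow> m = 0"
proof -
  assume "n = 0"
  then have "c 0 = c m" using ends by simp
  then show "m = 0" using P2(4) lens nth_eq_iff_index_eq[of P2 0 m] by simp
qed

lemma partB1: "v' \<in> set P2 \<Longrightarrow> \<exists>v\<in>set P1. real (d v v') \<le> D + (mu*(2*D+1) + eps)/2"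
proof -
  assume "v' \<in> set P2"
  then obtain j where j: "j \<le> m" "v' = c j" using inP2 by blast
  define \<sigma> where "\<sigma> i = (if i = n then m else if i = 0 then 0 else SOME j. j \<le> m \<and> d (g i) (c j) \<le> D)" for i
  have sig: "\<And>i. i \<le> n \<Longrightarrow> \<sigma> i \<le> m \<and> d (g i) (c (\<sigma> i)) \<le> D"
  proof -
    fix i assume i: "i \<le> n"
    show "\<sigma> i \<le> m \<and> d (g i) (c (\<sigma> i)) \<le> D"
    proof (cases "i = n")
      case True then show ?thesis unfolding \<sigma>_def using ends gdist_refl cV[of m] by simp
    next
      case False
      show ?thesis
      proof (cases "i = 0")
        case True then show ?thesis unfolding \<sigma>_def using ends gdist_refl cV[of 0] False by simp
      next
        case False
        then show ?thesis unfolding \<sigma>_def using \<open>i \<noteq> n\<close> near[OF i] by simp (rule someI_ex, blast)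
      qed
    qed
  qed
  have s0: "\<sigma> 0 = 0" unfolding \<sigma>_def using n0 by auto
  have sn: "\<sigma> n = m" unfolding \<sigma>_def by simp
  define I where "I = {i. i \<le> n \<and> \<sigma> i \<le> j}"
  have fI: "finite I" unfolding I_def by simp
  have I0: "0 \<in> I" unfolding I_def using s0 by simp
  define i0 where "i0 = Max I"
  have i0I: "i0 \<in> I" unfolding i0_def using fI I0 by (intro Max_in) auto
  have i0max: "\<And>i. i \<in> I \<Longrightarrow> i \<le> i0" unfolding i0_def using fI by simp
  show ?thesis
  proof (cases "i0 = n")
    case True
    then have "j = m" using i0I sn j unfolding I_def by simp
    then have "d (g n) v' = 0" using j ends gdist_refl cV[of m] by simp
    moreover have "0 \<le> mu * (2*D+1) + eps" using mupos epsnn by simp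
    ultimately show ?thesis using gin[of n] by (intro bexI[of _ "g n"]) auto
  next
    case False
    have i0n: "i0 < n" using i0I False unfolding I_def by simp
    define p where "p = \<sigma> i0"
    define q where "q = \<sigma> (Suc i0)"
    have pj: "p \<le> j" using i0I unfolding I_def p_def by simp
    have jq: "j < q"
    proof (rule ccontr)
      assume "\<not> j < q"
      then have "Suc i0 \<in> I" unfolding I_def q_def using i0n by simp
      then show False using i0max by fastforce
    qed
    have sp: "p \<le> m" "d (g i0) (c p) \<le> D" using sig[of i0] i0n unfolding p_def by auto
    have sq: "q \<le> m" "d (g (Suc i0)) (c q) \<le> D" using sig[of "Suc i0"] i0n unfolding q_def by auto
    have V1: "g i0 \<in> V" "g (Suc i0) \<in> V" "c p \<in> V" "c q \<in> V" "c j \<in> V"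
      using gV cV i0n sp sq j by auto
    have "d (c p) (c q) \<le> d (c p) (g i0) + d (g i0) (c q)" by (rule gdist_tri) (use V1 in auto)
    moreover have "d (g i0) (c q) \<le> d (g i0) (g (Suc i0)) + d (g (Suc i0)) (c q)"
      by (rule gdist_tri) (use V1 in auto)
    moreover have "d (g i0) (g (Suc i0)) = 1" using geo[of i0 "Suc i0"] i0n by simp
    moreover have "d (c p) (g i0) \<le> D" using sp dsym V1 by simp
    ultimately have dpq: "d (c p) (c q) \<le> 2*D + 1" using sq by linarith
    have "real (q - p) \<le> mu * d (c p) (c q) + eps" using sub[of p q] pj jq sq lens by simp
    moreover have "mu * d (c p) (c q) \<le> mu * (2*D+1)"
      using dpq mupos by (intro mult_left_mono) (auto simp del: of_nat_mult simp add: of_nat_mult[symmetric])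
    ultimately have qp0: "real (q - p) \<le> mu * (2*D+1) + eps" by simp
    then have qp: "real (q - p) / 2 \<le> (mu * (2*D+1) + eps) / 2" by (rule divide_right_mono) simp
    show ?thesis
    proof (cases "2*(j - p) \<le> q - p")
      case True
      have "d (g i0) (c j) \<le> d (g i0) (c p) + d (c p) (c j)" by (rule gdist_tri) (use V1 in auto)
      moreover have "d (c p) (c j) \<le> j - p" using c_le[of p j] pj j by simp
      ultimately have "d (g i0) (c j) \<le> D + (j - p)" using sp by linarith
      then have "real (d (g i0) v') \<le> D + real (q - p) / 2" using True j by simp
      then have "real (d (g i0) v') \<le> D + (mu*(2*D+1) + eps)/2" using qp by linarith
      then show ?thesis using gin[of i0] i0n by (intro bexI[of _ "g i0"]) auto
    next
      case False
      have "d (g (Suc i0)) (c j) \<le> d (g (Suc i0)) (c q) + d (c q) (c j)" by (rule gdist_tri) (use V1 in auto)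
      moreover have "d (c j) (c q) \<le> q - j" using c_le[of j q] jq sq by simp
      moreover have "d (c q) (c j) = d (c j) (c q)" using dsym V1 by simp
      ultimately have "d (g (Suc i0)) (c j) \<le> D + (q - j)" using sq by linarith
      then have "2 * d (g (Suc i0)) (c j) \<le> 2 * D + (q - p)" using False pj jq by arith
      then have "real (2 * d (g (Suc i0)) (c j)) \<le> real (2 * D + (q - p))" by (rule of_nat_mono)
      then have "real (d (g (Suc i0)) v') \<le> D + real (q - p) / 2" using j by simp
      then have "real (d (g (Suc i0)) v') \<le> D + (mu*(2*D+1) + eps)/2" using qp by linarith
      then show ?thesis using gin[of "Suc i0"] i0n by (intro bexI[of _ "g (Suc i0)"]) auto
    qed
  qed
qed

end




lemma ln2_ge': "ln (2::real) \<ge> 1/2" by (rule ln2_ge)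

lemma log2_le: assumes "(0::real) < Z" shows "log 2 Z \<le> 2 * Z"
proof (cases "ln Z \<le> 0")
  case True
  have "(0::real) < ln 2" by simp
  then have "ln Z / ln 2 \<le> 0" using True by (intro divide_nonpos_pos)
  then have "log 2 Z \<le> 0" unfolding log_def by simp
  then show ?thesis using assms by linarith
next
  case False
  have l2: "ln (2::real) \<ge> 1/2" by (rule ln2_ge)
  have "log 2 Z = ln Z / ln 2" unfolding log_def by simp
  also have "\<dots> \<le> ln Z / (1/2)" using False l2 by (intro divide_left_mono) auto
  also have "\<dots> \<le> 2 * (Z - 1)" using ln_le_minus_one[OF assms] by simp
  finally show ?thesis by simp
qed

lemma solve:
  fixes \<delta> \<alpha> \<beta> D \<eta> :: real
  assumes dn: "\<delta> \<ge> 0" and ap: "\<alpha> > 0" and bp: "\<beta> > 0" and Dn: "D \<ge> 0"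
    and hD: "D \<le> 1/2 + \<delta> + \<delta> * log 2 (\<alpha>*D+\<beta>)"
    and ep: "\<eta> > 0" and he: "1/2 + \<delta> + \<delta> * log 2 (\<alpha>*\<eta>+\<beta>) \<le> \<eta>" and d4: "4*\<delta> \<le> \<eta>"
  shows "D \<le> \<eta>"
proof (rule ccontr)
  assume "\<not> D \<le> \<eta>"
  then have De: "\<eta> < D" by simp
  define A where "A = \<alpha>*D+\<beta>"
  define B where "B = \<alpha>*\<eta>+\<beta>"
  have Bp: "B > 0" unfolding B_def using ap ep bp by (simp add: add_pos_pos)
  have AB: "B \<le> A" unfolding A_def B_def using De ap by simp
  have Ap: "A > 0" using AB Bp by simp
  have q1: "A / B \<ge> 1" using AB Bp by simp
  have l2: "ln (2::real) \<ge> 1/2" by (rule ln2_ge)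
  have "log 2 A - log 2 B = ln (A/B) / ln 2" unfolding log_def using Ap Bp
    by (simp add: ln_div diff_divide_distrib)
  also have "\<dots> \<le> ln (A/B) / (1/2)" using q1 l2 by (intro divide_left_mono) auto
  also have "\<dots> \<le> 2 * (A/B - 1)" using ln_le_minus_one[of "A/B"] Ap Bp by simp
  also have "A/B - 1 = \<alpha> * (D - \<eta>) / B" unfolding A_def B_def using Bp[unfolded B_def]
    by (simp add: field_simps)
  also have "\<alpha> * (D - \<eta>) / B \<le> (D - \<eta>) / \<eta>"
  proof -
    have "\<alpha> * \<eta> \<le> B" unfolding B_def using bp by simp
    then have "\<alpha> * (D - \<eta>) * \<eta> \<le> (D - \<eta>) * B" using De
      by (metis mult.assoc mult.commute mult_le_cancel_left_pos diff_gt_0_iff_gt)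
    then show ?thesis using Bp ep by (simp add: field_simps)
  qed
  finally have lg: "log 2 A - log 2 B \<le> 2 * ((D - \<eta>) / \<eta>)" by simp
  have "\<delta> * (log 2 A - log 2 B) \<le> \<delta> * (2 * ((D - \<eta>) / \<eta>))" using lg dn by (rule mult_left_mono)
  also have "\<dots> = (2 * \<delta> / \<eta>) * (D - \<eta>)" by (simp add: field_simps)
  also have "\<dots> \<le> (1/2) * (D - \<eta>)"
  proof (rule mult_right_mono)
    show "2 * \<delta> / \<eta> \<le> 1/2" using d4 ep by (simp add: field_simps)
  qed (use De in simp)
  finally have "\<delta> * log 2 A - \<delta> * log 2 B \<le> (D - \<eta>)/2" by (simp add: right_diff_distrib)
  then have "D \<le> \<eta> + (D - \<eta>)/2" using hD he unfolding A_def B_def by linarith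
  then show False using De by (simp add: field_simps)
qed




lemma finish:
  fixes \<delta> Z X :: real
  assumes dn: "\<delta> \<ge> 0" and Z: "Z \<ge> 32" and X: "0 < X" "X \<le> Z^3"
  shows "4*\<delta> \<le> (6*\<delta>+2) * log 2 Z" "0 < (6*\<delta>+2) * log 2 Z"
    "1/2 + \<delta> + \<delta> * log 2 X \<le> (6*\<delta>+2) * log 2 Z"
proof -
  have "log 2 32 \<le> log 2 Z" using Z by simp
  moreover have "log 2 (32::real) = 5"
  proof -
    show ?thesis using log_nat_power[of "2::real" 2 5] by simp
  qed
  ultimately have l5: "5 \<le> log 2 Z" by simp
  have "(6*\<delta>+2) * 5 \<le> (6*\<delta>+2) * log 2 Z" using l5 dn by (intro mult_left_mono) auto
  then show "4*\<delta> \<le> (6*\<delta>+2) * log 2 Z" "0 < (6*\<delta>+2) * log 2 Z" using dn by auto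
  have "log 2 X \<le> log 2 (Z^3)" using X Z by simp
  also have "\<dots> = 3 * log 2 Z" using Z by (simp add: log_nat_power)
  finally have "\<delta> * log 2 X \<le> \<delta> * (3 * log 2 Z)" using dn by (intro mult_left_mono) auto
  moreover have "1/2 + \<delta> \<le> (3*\<delta> + 2) * log 2 Z"
  proof -
    have "(3*\<delta> + 2) * 5 \<le> (3*\<delta> + 2) * log 2 Z" using l5 dn by (intro mult_left_mono) auto
    then show ?thesis using dn by simp
  qed
  ultimately show "1/2 + \<delta> + \<delta> * log 2 X \<le> (6*\<delta>+2) * log 2 Z" by (simp add: algebra_simps)
qed




lemma eta_mu_props:
  fixes \<delta> \<mu> :: real assumes dn: "\<delta> \<ge> 0" and mu: "\<mu> \<ge> 1"
  shows "4*\<delta> \<le> eta_mu \<delta> \<mu>" "0 < eta_mu \<delta> \<mu>"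
    "1/2 + \<delta> + \<delta> * log 2 (6*\<mu>*eta_mu \<delta> \<mu> + 0 + 2) \<le> eta_mu \<delta> \<mu>"
proof -
  define K where "K = 6*\<delta>+2"
  define l where "l = log 2 (K*(3*\<mu>+1)*\<mu>)"
  define Z where "Z = (6*\<mu>+2)*K*l + \<mu>"
  have K2: "K \<ge> 2" unfolding K_def using dn by simp
  have "K*(3*\<mu>+1)*\<mu> \<ge> 2*4*1" using K2 mu
    by (intro mult_mono) auto
  then have "log 2 8 \<le> l" unfolding l_def by simp
  moreover have "log 2 (8::real) = 3"
  proof -
    show ?thesis using log_nat_power[of "2::real" 2 3] by simp
  qed
  ultimately have l3: "l \<ge> 3" by simp
  have "(6*\<mu>+2)*K*l \<ge> 8*2*3" using K2 mu l3 by (intro mult_mono) auto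
  then have Z32: "Z \<ge> 32" unfolding Z_def using mu by simp
  have ZK: "18*\<mu>*K \<le> Z"
  proof -
    have "(6*\<mu>)*K*3 \<le> (6*\<mu>+2)*K*l" using K2 mu l3 by (intro mult_mono) auto
    then show ?thesis unfolding Z_def using mu by simp
  qed
  have e: "eta_mu \<delta> \<mu> = K * log 2 Z" unfolding eta_mu_def K_def Z_def l_def by simp
  define X where "X = 6*\<mu>*(K * log 2 Z) + 0 + 2"
  have lz: "log 2 Z \<le> 2*Z" using log2_le Z32 by simp
  have lz0: "0 \<le> log 2 Z" using Z32 by simp
  have "0 \<le> 6*\<mu>*(K * log 2 Z)" using mu K2 lz0 by (intro mult_nonneg_nonneg) auto
  then have Xp: "0 < X" unfolding X_def by linarith
  have "6*\<mu>*K*log 2 Z \<le> 6*\<mu>*K*(2*Z)" using lz mu K2 by (intro mult_left_mono) auto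
  also have "\<dots> = (12*\<mu>*K)*Z" by simp
  also have "\<dots> \<le> Z * Z" using ZK Z32 by (intro mult_right_mono) auto
  finally have "X \<le> Z*Z + 2" unfolding X_def by (simp add: mult.assoc)
  also have "\<dots> \<le> Z^3"
  proof -
    have zz: "2 * Z \<le> Z * Z" using Z32 by (intro mult_right_mono) auto
    have "Z*Z*2 \<le> Z*Z*Z" using Z32 zz by (intro mult_left_mono) auto
    then have "Z*Z + 2*Z \<le> Z*Z*Z" "Z*Z + 2 \<le> Z*Z*Z" using zz Z32 by linarith+
    then show ?thesis by (simp add: power3_eq_cube)
  qed
  finally have XZ: "X \<le> Z^3" .
  have fin: "4*\<delta> \<le> (6*\<delta>+2) * log 2 Z" "0 < (6*\<delta>+2) * log 2 Z"
    "1/2 + \<delta> + \<delta> * log 2 X \<le> (6*\<delta>+2) * log 2 Z" using finish[OF dn Z32 Xp XZ] by auto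
  then show "4*\<delta> \<le> eta_mu \<delta> \<mu>" "0 < eta_mu \<delta> \<mu>"
    "1/2 + \<delta> + \<delta> * log 2 (6*\<mu>*eta_mu \<delta> \<mu> + 0 + 2) \<le> eta_mu \<delta> \<mu>"
    unfolding e X_def K_def by auto
qed




lemma eta_eps_props:
  fixes \<delta> \<epsilon> :: real assumes dn: "\<delta> \<ge> 0" and ep: "\<epsilon> \<ge> 0"
  shows "4*\<delta> \<le> eta_eps \<delta> \<epsilon>" "0 < eta_eps \<delta> \<epsilon>"
    "1/2 + \<delta> + \<delta> * log 2 (6*1*eta_eps \<delta> \<epsilon> + \<epsilon> + 2) \<le> eta_eps \<delta> \<epsilon>"
proof -
  define K where "K = 6*\<delta>+2"
  define l where "l = log 2 (K*(4+2*\<epsilon>))"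
  define Z where "Z = 8*K*l + 1 + \<epsilon>/2"
  have K2: "K \<ge> 2" unfolding K_def using dn by simp
  have "K*(4+2*\<epsilon>) \<ge> 2*4" using K2 ep by (intro mult_mono) auto
  then have "log 2 8 \<le> l" unfolding l_def by simp
  moreover have "log 2 (8::real) = 3"
  proof -
    show ?thesis using log_nat_power[of "2::real" 2 3] by simp
  qed
  ultimately have l3: "l \<ge> 3" by simp
  have KL: "8*K*l \<ge> 8*K*3" using K2 l3 by (intro mult_left_mono) auto
  then have Z32: "Z \<ge> 32" unfolding Z_def using ep K2 by linarith
  have ZK: "12*K \<le> Z" unfolding Z_def using KL ep K2 by linarith
  have Ze: "\<epsilon> + 2 \<le> 2 * Z" unfolding Z_def using KL K2 by simp
  have e: "eta_eps \<delta> \<epsilon> = K * log 2 Z" unfolding eta_eps_def K_def Z_def l_def by simp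
  define X where "X = 6*1*(K * log 2 Z) + \<epsilon> + 2"
  have lz: "log 2 Z \<le> 2*Z" using log2_le Z32 by simp
  have lz0: "0 \<le> log 2 Z" using Z32 by simp
  have "0 \<le> K * log 2 Z" using K2 lz0 by simp
  then have Xp: "0 < X" unfolding X_def using ep by linarith
  have "6*K*log 2 Z \<le> 6*K*(2*Z)" using lz K2 by (intro mult_left_mono) auto
  also have "\<dots> = (12*K)*Z" by simp
  also have "\<dots> \<le> Z * Z" using ZK Z32 by (intro mult_right_mono) auto
  finally have "X \<le> Z*Z + 2*Z" unfolding X_def using Ze by (simp add: mult.assoc)
  also have "\<dots> \<le> Z^3"
  proof -
    have zz: "2 * Z \<le> Z * Z" using Z32 by (intro mult_right_mono) auto
    have "Z*Z*2 \<le> Z*Z*Z" using Z32 zz by (intro mult_left_mono) auto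
    then have "Z*Z + 2*Z \<le> Z*Z*Z" "Z*Z + 2 \<le> Z*Z*Z" using zz Z32 by linarith+
    then show ?thesis by (simp add: power3_eq_cube)
  qed
  finally have XZ: "X \<le> Z^3" .
  have fin: "4*\<delta> \<le> (6*\<delta>+2) * log 2 Z" "0 < (6*\<delta>+2) * log 2 Z"
    "1/2 + \<delta> + \<delta> * log 2 X \<le> (6*\<delta>+2) * log 2 Z" using finish[OF dn Z32 Xp XZ] by auto
  then show "4*\<delta> \<le> eta_eps \<delta> \<epsilon>" "0 < eta_eps \<delta> \<epsilon>"
    "1/2 + \<delta> + \<delta> * log 2 (6*1*eta_eps \<delta> \<epsilon> + \<epsilon> + 2) \<le> eta_eps \<delta> \<epsilon>"
    unfolding e X_def K_def by auto
qed




theorem theorem6: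
  fixes V :: "'a set" and E :: "'a \<Rightarrow> 'a \<Rightarrow> bool"
    and P1 P2 :: "'a list" and u0 u1 :: 'a and \<mu> \<epsilon> :: real
  assumes G: "graph V E" and conn: "connected_graph V E" and n4: "card V \<ge> 4"
    and P1: "is_path V E P1" "hd P1 = u0" "last P1 = u1" "plen P1 = gdist V E u0 u1"
    and P2: "is_path V E P2" "hd P2 = u0" "last P2 = u1"
  shows
    "(\<mu> \<ge> 1 \<and> mu_approx_short V E \<mu> P2 \<longrightarrow>
       (let \<eta> = eta_mu (delta_worst V E) \<mu> in
         (\<forall>v\<in>set P1. \<exists>v'\<in>set P2. int (gdist V E v v') \<le> \<lfloor>\<eta>\<rfloor>) \<and>
         (\<forall>v'\<in>set P2. \<exists>v\<in>set P1. int (gdist V E v v') \<le>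
             min \<lfloor>(\<mu>+1)*\<eta> + \<mu>/2\<rfloor> \<lfloor>\<mu> * real (gdist V E u0 u1) / 2\<rfloor>)))
   \<and> (\<epsilon> \<ge> 0 \<and> eps_additive_short V E \<epsilon> P2 \<longrightarrow>
       (let \<eta> = eta_eps (delta_worst V E) \<epsilon> in
         (\<forall>v\<in>set P1. \<exists>v'\<in>set P2. int (gdist V E v v') \<le> \<lfloor>\<eta>\<rfloor>) \<and>
         (\<forall>v'\<in>set P2. \<exists>v\<in>set P1. int (gdist V E v v') \<le>
             min \<lfloor>2*\<eta> + (1+\<epsilon>)/2\<rfloor> \<lfloor>(real (gdist V E u0 u1) + \<epsilon>) / 2\<rfloor>)))"
proof -
  interpret hg V E by unfold_locales (rule G, rule conn)
  have w1: "is_walk V E P1" and w2: "is_walk V E P2" and dP2: "distinct P2"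
    using P1 P2 unfolding is_path_def by auto
  have u0V: "u0 \<in> V" using w1 P1 unfolding is_walk_def by (auto simp: hd_in_set[of P1] subset_iff)
  have dwn: "0 \<le> dw" using dw_nonneg[OF u0V] .
  have pl: "plen P1 = d (hd P1) (last P1)" using P1 by simp
  have A: "\<mu> \<ge> 1 \<and> mu_approx_short V E \<mu> P2 \<longrightarrow>
       (let \<eta> = eta_mu (delta_worst V E) \<mu> in
         (\<forall>v\<in>set P1. \<exists>v'\<in>set P2. int (gdist V E v v') \<le> \<lfloor>\<eta>\<rfloor>) \<and>
         (\<forall>v'\<in>set P2. \<exists>v\<in>set P1. int (gdist V E v v') \<le>
             min \<lfloor>(\<mu>+1)*\<eta> + \<mu>/2\<rfloor> \<lfloor>\<mu> * real (gdist V E u0 u1) / 2\<rfloor>))"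
  proof
    assume h: "\<mu> \<ge> 1 \<and> mu_approx_short V E \<mu> P2"
    interpret cm: core V E P1 P2 \<mu> 0
    proof (unfold_locales)
      fix s t assume st: "s \<le> t" "t < length P2"
      show "real (t - s) \<le> \<mu> * real (d (P2!s) (P2!t)) + 0"
      proof (cases "s = t")
        case True then show ?thesis using h by simp
      next
        case False then show ?thesis using h st unfolding mu_approx_short_def by simp
      qed
    qed (use w1 w2 dP2 P1 P2 pl h in auto)
    define \<eta> where "\<eta> = eta_mu dw \<mu>"
    have ep: "4*dw \<le> \<eta>" "0 < \<eta>" "1/2 + dw + dw * log 2 (6*\<mu>*\<eta> + 0 + 2) \<le> \<eta>"
      using eta_mu_props[OF dwn, of \<mu>] h unfolding \<eta>_def by auto
    have Dle: "real cm.D \<le> \<eta>"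
    proof (rule solve[OF dwn _ _ _ _ ep(2)])
      show "1/2 + dw + dw * log 2 (6*\<mu>*\<eta> + 2) \<le> \<eta>" using ep by simp
      show "real cm.D \<le> 1/2 + dw + dw * log 2 (6*\<mu>*real cm.D + 2)" using cm.partA by simp
    qed (use h ep in auto)
    have a: "\<forall>v\<in>set P1. \<exists>v'\<in>set P2. int (gdist V E v v') \<le> \<lfloor>\<eta>\<rfloor>"
    proof
      fix v assume "v \<in> set P1"
      then obtain v' where "v' \<in> set P2" "d v v' \<le> cm.D" using cm.partA2 by blast
      moreover have "real (d v v') \<le> \<eta>" using calculation(2) Dle of_nat_mono[OF calculation(2)] by linarith
      ultimately show "\<exists>v'\<in>set P2. int (gdist V E v v') \<le> \<lfloor>\<eta>\<rfloor>" by (auto simp: le_floor_iff)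
    qed
    have b: "\<forall>v'\<in>set P2. \<exists>v\<in>set P1. int (gdist V E v v') \<le>
             min \<lfloor>(\<mu>+1)*\<eta> + \<mu>/2\<rfloor> \<lfloor>\<mu> * real (gdist V E u0 u1) / 2\<rfloor>"
    proof
      fix v' assume v': "v' \<in> set P2"
      show "\<exists>v\<in>set P1. int (gdist V E v v') \<le>
             min \<lfloor>(\<mu>+1)*\<eta> + \<mu>/2\<rfloor> \<lfloor>\<mu> * real (gdist V E u0 u1) / 2\<rfloor>"
      proof (cases "\<lfloor>(\<mu>+1)*\<eta> + \<mu>/2\<rfloor> \<le> \<lfloor>\<mu> * real (gdist V E u0 u1) / 2\<rfloor>")
        case True
        obtain v where v: "v \<in> set P1" "real (d v v') \<le> cm.D + (\<mu>*(2*cm.D+1) + 0)/2"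
          using cm.partB1[OF v'] by blast
        have "\<mu>*(2*cm.D+1) \<le> \<mu>*(2*\<eta>+1)" using Dle h by (intro mult_left_mono) auto
        then have m1: "\<mu>*(2*cm.D+1)/2 \<le> \<mu>*(2*\<eta>+1)/2" by (rule divide_right_mono) simp
        have e1: "cm.D + (\<mu>*(2*cm.D+1)+0)/2 = cm.D + \<mu>*(2*cm.D+1)/2" by simp
        have e2: "(\<mu>+1)*\<eta> + \<mu>/2 = \<eta> + \<mu>*(2*\<eta>+1)/2" by (simp add: field_simps)
        have "real (d v v') \<le> (\<mu>+1)*\<eta> + \<mu>/2" using v(2) Dle m1 unfolding e1 e2 by linarith
        then have "int (d v v') \<le> \<lfloor>(\<mu>+1)*\<eta> + \<mu>/2\<rfloor>" by (simp add: le_floor_iff)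
        then show ?thesis using True v(1) by auto
      next
        case False
        obtain v where v: "v \<in> set P1" "real (d v v') \<le> (\<mu> * d (hd P1) (last P1) + 0)/2"
          using cm.partB2[OF v'] by blast
        then have "int (d v v') \<le> \<lfloor>\<mu> * real (gdist V E u0 u1) / 2\<rfloor>" using P1 by (simp add: le_floor_iff)
        then show ?thesis using False v(1) by auto
      qed
    qed
    show "let \<eta> = eta_mu (delta_worst V E) \<mu> in
         (\<forall>v\<in>set P1. \<exists>v'\<in>set P2. int (gdist V E v v') \<le> \<lfloor>\<eta>\<rfloor>) \<and>
         (\<forall>v'\<in>set P2. \<exists>v\<in>set P1. int (gdist V E v v') \<le>
             min \<lfloor>(\<mu>+1)*\<eta> + \<mu>/2\<rfloor> \<lfloor>\<mu> * real (gdist V E u0 u1) / 2\<rfloor>)"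
      using a b unfolding \<eta>_def Let_def by simp
  qed
  have B: "\<epsilon> \<ge> 0 \<and> eps_additive_short V E \<epsilon> P2 \<longrightarrow>
       (let \<eta> = eta_eps (delta_worst V E) \<epsilon> in
         (\<forall>v\<in>set P1. \<exists>v'\<in>set P2. int (gdist V E v v') \<le> \<lfloor>\<eta>\<rfloor>) \<and>
         (\<forall>v'\<in>set P2. \<exists>v\<in>set P1. int (gdist V E v v') \<le>
             min \<lfloor>2*\<eta> + (1+\<epsilon>)/2\<rfloor> \<lfloor>(real (gdist V E u0 u1) + \<epsilon>) / 2\<rfloor>))"
  proof
    assume h: "\<epsilon> \<ge> 0 \<and> eps_additive_short V E \<epsilon> P2"
    have ne2: "P2 \<noteq> []" using w2 unfolding is_walk_def by auto
    have P2V: "set P2 \<subseteq> V" using w2 unfolding is_walk_def by auto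
    have subl: "real (t - s) \<le> 1 * real (d (P2!s) (P2!t)) + \<epsilon>" if st: "s \<le> t" "t < length P2" for s t
    proof -
      define m where "m = length P2 - 1"
      have lm: "length P2 = Suc m" using ne2 unfolding m_def by simp
      have hl: "hd P2 = P2!0" "last P2 = P2!m" using walk_hd_last_nth[OF ne2] lm by auto
      have V3: "P2!0 \<in> V" "P2!s \<in> V" "P2!t \<in> V" "P2!m \<in> V" using P2V st lm by (auto simp: subset_iff)
      have "real m \<le> real (d (P2!0) (P2!m)) + \<epsilon>" using h hl lm unfolding eps_additive_short_def plen_def by simp
      moreover have "d (P2!0) (P2!m) \<le> d (P2!0) (P2!s) + d (P2!s) (P2!m)" by (rule gdist_tri) (use V3 in auto)
      moreover have "d (P2!s) (P2!m) \<le> d (P2!s) (P2!t) + d (P2!t) (P2!m)" by (rule gdist_tri) (use V3 in auto)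
      moreover have "d (P2!0) (P2!s) \<le> s" "d (P2!t) (P2!m) \<le> m - t"
        using walk_nth(1)[OF w2, of 0 s] walk_nth(1)[OF w2, of t m] st lm by auto
      ultimately have "real m \<le> real s + real (d (P2!s) (P2!t)) + real (m - t) + \<epsilon>" by linarith
      then show ?thesis using st lm by (simp add: of_nat_diff)
    qed
    interpret ce: core V E P1 P2 1 \<epsilon>
      by unfold_locales (use w1 w2 dP2 P1 P2 pl h subl in auto)
    define \<eta> where "\<eta> = eta_eps dw \<epsilon>"
    have ep: "4*dw \<le> \<eta>" "0 < \<eta>" "1/2 + dw + dw * log 2 (6*1*\<eta> + \<epsilon> + 2) \<le> \<eta>"
      using eta_eps_props[OF dwn, of \<epsilon>] h unfolding \<eta>_def by auto
    have Dle: "real ce.D \<le> \<eta>"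
    proof (rule solve[OF dwn _ _ _ _ ep(2)])
      show "1/2 + dw + dw * log 2 (6*\<eta> + (\<epsilon> + 2)) \<le> \<eta>" using ep by (simp add: add.assoc)
      show "real ce.D \<le> 1/2 + dw + dw * log 2 (6*real ce.D + (\<epsilon> + 2))" using ce.partA by (simp add: add.assoc)
    qed (use h ep in auto)
    have a: "\<forall>v\<in>set P1. \<exists>v'\<in>set P2. int (gdist V E v v') \<le> \<lfloor>\<eta>\<rfloor>"
    proof
      fix v assume "v \<in> set P1"
      then obtain v' where "v' \<in> set P2" "d v v' \<le> ce.D" using ce.partA2 by blast
      moreover have "real (d v v') \<le> \<eta>" using calculation(2) Dle of_nat_mono[OF calculation(2)] by linarith
      ultimately show "\<exists>v'\<in>set P2. int (gdist V E v v') \<le> \<lfloor>\<eta>\<rfloor>" by (auto simp: le_floor_iff)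
    qed
    have b: "\<forall>v'\<in>set P2. \<exists>v\<in>set P1. int (gdist V E v v') \<le>
             min \<lfloor>2*\<eta> + (1+\<epsilon>)/2\<rfloor> \<lfloor>(real (gdist V E u0 u1) + \<epsilon>) / 2\<rfloor>"
    proof
      fix v' assume v': "v' \<in> set P2"
      show "\<exists>v\<in>set P1. int (gdist V E v v') \<le>
             min \<lfloor>2*\<eta> + (1+\<epsilon>)/2\<rfloor> \<lfloor>(real (gdist V E u0 u1) + \<epsilon>) / 2\<rfloor>"
      proof (cases "\<lfloor>2*\<eta> + (1+\<epsilon>)/2\<rfloor> \<le> \<lfloor>(real (gdist V E u0 u1) + \<epsilon>) / 2\<rfloor>")
        case True
        obtain v where v: "v \<in> set P1" "real (d v v') \<le> ce.D + ((2*ce.D+1) + \<epsilon>)/2"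
          using ce.partB1[OF v'] by auto
        have e1: "ce.D + ((2*ce.D+1) + \<epsilon>)/2 = 2*ce.D + (1+\<epsilon>)/2" by (simp add: field_simps)
        have "real (d v v') \<le> 2*\<eta> + (1+\<epsilon>)/2" using v(2) Dle unfolding e1 by linarith
        then have "int (d v v') \<le> \<lfloor>2*\<eta> + (1+\<epsilon>)/2\<rfloor>" by (simp add: le_floor_iff)
        then show ?thesis using True v(1) by auto
      next
        case False
        obtain v where v: "v \<in> set P1" "real (d v v') \<le> (d (hd P1) (last P1) + \<epsilon>)/2"
          using ce.partB2[OF v'] by auto
        then have "int (d v v') \<le> \<lfloor>(real (gdist V E u0 u1) + \<epsilon>) / 2\<rfloor>" using P1 by (simp add: le_floor_iff)
        then show ?thesis using False v(1) by auto
      qed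
    qed
    show "let \<eta> = eta_eps (delta_worst V E) \<epsilon> in
         (\<forall>v\<in>set P1. \<exists>v'\<in>set P2. int (gdist V E v v') \<le> \<lfloor>\<eta>\<rfloor>) \<and>
         (\<forall>v'\<in>set P2. \<exists>v\<in>set P1. int (gdist V E v v') \<le>
             min \<lfloor>2*\<eta> + (1+\<epsilon>)/2\<rfloor> \<lfloor>(real (gdist V E u0 u1) + \<epsilon>) / 2\<rfloor>)"
      using a b unfolding \<eta>_def Let_def by simp
  qed
  show ?thesis using A B by blast
qed



end
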